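(* Let $K=2$ and suppose that for every horizon $T$ (a multiple of $100$) a valid pair $(\eta,\gamma)=(\eta_T,\gamma_T)$ in the non-trivial regime is chosen. Then there exist a constant $c>0$ and $T_0$ such that for all $T\ge T_0$, WSU-UX run with $(\eta_T,\gamma_T)$ on the two-phase loss sequence satisfies $\mathbb{E}[\mathcal R_T]\ge c\,T^{2/3}$.
   Context: WSU-UX. Fix integers $K\ge 2$ and $T\ge 1$ and hyperparameters $\eta,\gamma$. The pair $(\eta,\gamma)$ is called valid if $\eta,\gamma\in(0,1/2)$ and $\eta K/\gamma\le 1/2$. Given a fixed loss sequence $\ell_t\in[0,1]^K$, WSU-UX sets $\pi_{1,i}=1/K$ and in each round $t$: forms $\tilde\pi_{t,i}=(1-\gamma)\pi_{t,i}+\gamma/K$; draws $I_t$ with $\Pr(I_t=i\mid\mathcal F_{t-1})=\tilde\pi_{t,i}$; sets $\hat\ell_{t,i}=\ell_{t,i}\mathbf 1[I_t=i]/\tilde\pi_{t,i}$; and updates $\pi_{t+1,i}=\pi_{t,i}\bigl(1-\eta(\hat\ell_{t,i}-\sum_{j}\pi_{t,j}\hat\ell_{t,j})\bigr)$; $\mathcal F_t$ is the history generated by $I_1,\dots,I_t$. The regret is $\mathbb{E}[\mathcal R_T]=\mathbb{E}[\sum_{t}\sum_{j}\tilde\pi_{t,j}\ell_{t,j}]-\min_i\sum_t\ell_{t,i}$. Non-trivial regime: $\eta\ge T^{-2/3}$ and $\gamma\le T^{-1/3}$. Two-phase loss sequence ($K=2$, $T$ a multiple of $100$, $T_1=T/100$):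 $\ell_{t,1}=1,\ell_{t,2}=0$ for $1\le t\le T_1$ and $\ell_{t,1}=0,\ell_{t,2}=1$ for $T_1<t\le T$. *)

theory Defs
  imports Complex_Main
begin

text \<open>Arms are indexed 0..K-1 (arm i of the paper is index i-1). Rounds are 1..T.
  A loss sequence is a function ell t i (round t, arm i).
  Histories are lists of chosen arms stored in REVERSE chronological order
  (the head is the most recent arm).\<close>

definition valid_pair :: "nat \<Rightarrow> real \<Rightarrow> real \<Rightarrow> bool" where
  "valid_pair K \<eta> \<gamma> \<longleftrightarrow> 0 < \<eta> \<and> \<eta> < 1/2 \<and> 0 < \<gamma> \<and> \<gamma> < 1/2 \<and> \<eta> * real K / \<gamma> \<le> 1/2"

definition wsu_mix :: "nat \<Rightarrow> real \<Rightarrow> (nat \<Rightarrow> real) \<Rightarrow> nat \<Rightarrow> real" where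
  "wsu_mix K \<gamma> p i = (1 - \<gamma>) * p i + \<gamma> / real K"

definition wsu_est :: "nat \<Rightarrow> real \<Rightarrow> (nat \<Rightarrow> real) \<Rightarrow> (nat \<Rightarrow> real) \<Rightarrow> nat \<Rightarrow> nat \<Rightarrow> real" where
  "wsu_est K \<gamma> p l a i = (if i = a then l i / wsu_mix K \<gamma> p i else 0)"

definition wsu_update :: "nat \<Rightarrow> real \<Rightarrow> real \<Rightarrow> (nat \<Rightarrow> real) \<Rightarrow> (nat \<Rightarrow> real) \<Rightarrow> nat \<Rightarrow> nat \<Rightarrow> real" where
  "wsu_update K \<eta> \<gamma> p l a i =
     p i * (1 - \<eta> * (wsu_est K \<gamma> p l a i - (\<Sum>j<K. p j * wsu_est K \<gamma> p l a j)))"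

text \<open>pi after the (reversed) history h: if length h = t-1 this is the vector pi_t.\<close>
fun wsu_pi :: "nat \<Rightarrow> real \<Rightarrow> real \<Rightarrow> (nat \<Rightarrow> nat \<Rightarrow> real) \<Rightarrow> nat list \<Rightarrow> nat \<Rightarrow> real" where
  "wsu_pi K \<eta> \<gamma> ell [] = (\<lambda>i. 1 / real K)"
| "wsu_pi K \<eta> \<gamma> ell (a # h) =
     wsu_update K \<eta> \<gamma> (wsu_pi K \<eta> \<gamma> ell h) (ell (length h + 1)) a"

fun wsu_prob :: "nat \<Rightarrow> real \<Rightarrow> real \<Rightarrow> (nat \<Rightarrow> nat \<Rightarrow> real) \<Rightarrow> nat list \<Rightarrow> real" where
  "wsu_prob K \<eta> \<gamma> ell [] = 1"
| "wsu_prob K \<eta> \<gamma> ell (a # h) =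
     wsu_prob K \<eta> \<gamma> ell h * wsu_mix K \<gamma> (wsu_pi K \<eta> \<gamma> ell h) a"

text \<open>Realised algorithm loss sum_t sum_j tilde-pi_{t,j} ell_{t,j} along a full reversed
  history h of length T; the first t-1 rounds are  drop (T - (t-1)) h.\<close>
definition wsu_alg_loss :: "nat \<Rightarrow> real \<Rightarrow> real \<Rightarrow> (nat \<Rightarrow> nat \<Rightarrow> real) \<Rightarrow> nat \<Rightarrow> nat list \<Rightarrow> real" where
  "wsu_alg_loss K \<eta> \<gamma> ell T h =
     (\<Sum>t=1..T. \<Sum>j<K. wsu_mix K \<gamma> (wsu_pi K \<eta> \<gamma> ell (drop (T - (t - 1)) h)) j * ell t j)"

definition wsu_expected_regret :: "nat \<Rightarrow> real \<Rightarrow> real \<Rightarrow> (nat \<Rightarrow> nat \<Rightarrow> real) \<Rightarrow> nat \<Rightarrow> real" where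
  "wsu_expected_regret K \<eta> \<gamma> ell T =
     (\<Sum>h\<in>{h. length h = T \<and> set h \<subseteq> {..<K}}.
        wsu_prob K \<eta> \<gamma> ell h * wsu_alg_loss K \<eta> \<gamma> ell T h)
     - Min ((\<lambda>i. \<Sum>t=1..T. ell t i) ` {..<K})"

definition two_phase_loss :: "nat \<Rightarrow> nat \<Rightarrow> nat \<Rightarrow> real" where
  "two_phase_loss T t i =
     (if t \<le> T div 100 then (if i = 0 then 1 else 0) else (if i = 0 then 0 else 1))"

end

theory Submission
  imports Defs
begin

lemma ln_1m_le: fixes x :: real assumes "0 \<le> x" "x < 1" shows "ln (1 - x) \<le> - x - x^2/2"
proof -
  let ?f = "\<lambda>x::real. - x - x^2/2 - ln (1 - x)"
  have D: "(?f has_real_derivative (-1 - y + 1/(1-y))) (at y)" if "y < 1" for y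
      using that by (auto intro!: derivative_eq_intros simp: field_simps)
  have "?f 0 \<le> ?f x"
  proof (rule DERIV_nonneg_imp_increasing_open[OF assms(1)])
    fix y assume y: "0 < y" "y < x"
    then have y1: "y < 1" using assms by linarith
    have "-1 - y + 1/(1-y) \<ge> 0" using y y1 by (simp add: field_simps)
    then show "\<exists>d. (?f has_real_derivative d) (at y) \<and> 0 \<le> d" using D[OF y1] by blast
  next
    show "continuous_on {0..x} ?f"
    proof (rule continuous_at_imp_continuous_on, intro ballI)
      fix y assume "y \<in> {0..x}"
      then have "y < 1" using assms by auto
      from DERIV_isCont[OF D[OF this]] show "isCont ?f y" .
    qed
  qed
  then show ?thesis by simp
qed

locale wsu2 =
  fixes \<eta> \<gamma> :: real and T :: nat
  assumes eta_pos: "0 < \<eta>" and gamma_lt: "\<gamma> < 1/2" and eta_gamma: "4*\<eta> \<le> \<gamma>"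
begin

definition P :: "nat list \<Rightarrow> nat \<Rightarrow> real" where "P h = wsu_pi 2 \<eta> \<gamma> (two_phase_loss T) h"
definition p :: "nat list \<Rightarrow> real" where "p h = P h 0"
definition tp :: "nat list \<Rightarrow> real" where "tp h = (1-\<gamma>) * p h + \<gamma>/2"
definition tq :: "nat list \<Rightarrow> real" where "tq h = (1-\<gamma>) * (1 - p h) + \<gamma>/2"

lemma gamma_pos: "0 < \<gamma>" using eta_pos eta_gamma by linarith

lemma P_Cons_raw: "P (a#h) i = P h i * (1 - \<eta> * (wsu_est 2 \<gamma> (P h) (two_phase_loss T (length h + 1)) a i
   - (P h 0 * wsu_est 2 \<gamma> (P h) (two_phase_loss T (length h + 1)) a 0
     + P h 1 * wsu_est 2 \<gamma> (P h) (two_phase_loss T (length h + 1)) a 1)))"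
  by (simp add: P_def wsu_update_def numeral_2_eq_2)

lemma inv: "P h 1 = 1 - P h 0 \<and> 0 < P h 0 \<and> P h 0 < 1"
proof (induction h)
  case Nil
  then show ?case by (simp add: P_def)
next
  case (Cons a h)
  define x where "x = P h 0"
  have q: "P h 1 = 1 - x" "P h (Suc 0) = 1 - x" and x0: "0 < x" and x1: "x < 1" using Cons by (auto simp: x_def)
  have g: "0 < \<gamma>" "\<gamma> < 1/2" "4*\<eta> \<le> \<gamma>" "0 < \<eta>" using gamma_pos gamma_lt eta_gamma eta_pos by auto
  define tpx where "tpx = (1-\<gamma>)*x + \<gamma>/2"
  define tqx where "tqx = (1-\<gamma>)*(1-x) + \<gamma>/2"
  have tpg: "tpx \<ge> \<gamma>/2" "tqx \<ge> \<gamma>/2" using g x0 x1 by (auto simp: tpx_def tqx_def)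
  have mix0: "wsu_mix 2 \<gamma> (P h) 0 = tpx" by (simp add: wsu_mix_def tpx_def x_def)
  have mix1: "wsu_mix 2 \<gamma> (P h) 1 = tqx" "wsu_mix 2 \<gamma> (P h) (Suc 0) = tqx" by (simp_all add: wsu_mix_def tqx_def q)
  have e1: "\<eta>*(1-x)/tpx \<le> 1/2"
  proof -
    have "\<eta>*(1-x) \<le> \<eta>" using g x0 by (simp add: mult_left_le)
    also have "\<dots> \<le> tpx/2" using tpg g by linarith
    finally show ?thesis using tpg g by (simp add: divide_le_eq)
  qed
  have e2: "\<eta>*x/tqx \<le> 1/2"
  proof -
    have "\<eta>*x \<le> \<eta>" using g x1 by (simp add: mult_left_le_one_le less_imp_le)
    also have "\<dots> \<le> tqx/2" using tpg g by linarith
    finally show ?thesis using tpg g by (simp add: divide_le_eq)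
  qed
  show ?case
  proof (cases "length h + 1 \<le> T div 100")
    case True
    then have l0: "two_phase_loss T (length h + 1) 0 = 1" "two_phase_loss T (length h + 1) 1 = 0"
      by (auto simp: two_phase_loss_def)
    show ?thesis
    proof (cases "a = 0")
      case True
      define y where "y = \<eta>*(1-x)/tpx"
      have A: "P (a#h) 0 = x * (1 - y)" "P (a#h) 1 = 1 - x * (1 - y)"
        unfolding P_Cons_raw using True l0 tpg g
        by (auto simp: wsu_est_def mix0 q x_def[symmetric] y_def field_simps)
      have "0 < 1 - y" using e1 unfolding y_def by linarith
      moreover have "y > 0" using g x1 tpg by (auto simp: y_def)
      ultimately have "0 < x*(1-y)" "x*(1-y) < 1" using x0 x1
        by (auto intro: mult_pos_pos) (smt (verit) mult_less_cancel_left2)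
      then show ?thesis unfolding A by simp
    next
      case False
      have A: "P (a#h) 0 = x" "P (a#h) 1 = 1-x"
        unfolding P_Cons_raw using False l0 by (auto simp: wsu_est_def q x_def)
      then show ?thesis using x0 x1 by simp
    qed
  next
    case False
    then have l0: "two_phase_loss T (length h + 1) 0 = 0" "two_phase_loss T (length h + 1) 1 = 1"
      by (auto simp: two_phase_loss_def)
    show ?thesis
    proof (cases "a = 1")
      case True
      define y where "y = \<eta>*x/tqx"
      have A: "P (a#h) 0 = 1 - (1-x) * (1 - y)" "P (a#h) 1 = (1-x) * (1 - y)"
        unfolding P_Cons_raw using True l0 tpg g
        by (auto simp: wsu_est_def mix1 q x_def[symmetric] y_def field_simps)
      have "0 < 1 - y" using e2 unfolding y_def by linarith
      moreover have "y > 0" using g x0 tpg by (auto simp: y_def)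
      ultimately have "0 < (1-x)*(1-y)" "(1-x)*(1-y) < 1" using x0 x1
        by (auto intro: mult_pos_pos) (smt (verit) mult_less_cancel_left2)
      then show ?thesis unfolding A by simp
    next
      case False
      have A: "P (a#h) 0 = x" "P (a#h) 1 = 1-x"
        unfolding P_Cons_raw using False l0 by (auto simp: wsu_est_def q x_def)
      then show ?thesis using x0 x1 by simp
    qed
  qed
qed

lemma P1: "P h 1 = 1 - p h" "P h (Suc 0) = 1 - p h" using inv[of h] by (simp_all add: p_def)
lemma p_pos: "0 < p h" and p_lt1: "p h < 1" using inv[of h] by (simp_all add: p_def)
lemma tp_ge: "tp h \<ge> \<gamma>/2" using p_pos[of h] gamma_lt by (simp add: tp_def)
lemma tq_ge: "tq h \<ge> \<gamma>/2" using p_lt1[of h] gamma_lt by (simp add: tq_def)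
lemma tp_pos: "tp h > 0" using tp_ge[of h] gamma_pos by linarith
lemma tq_pos: "tq h > 0" using tq_ge[of h] gamma_pos by linarith
lemma tpq: "tp h + tq h = 1" by (simp add: tp_def tq_def algebra_simps)
lemma mix0: "wsu_mix 2 \<gamma> (P h) 0 = tp h" by (simp add: wsu_mix_def tp_def p_def)
lemma mix1: "wsu_mix 2 \<gamma> (P h) (Suc 0) = tq h" by (simp add: wsu_mix_def tq_def P1)

lemma p_ph1_0: "length h < T div 100 \<Longrightarrow> p (0#h) = p h * (1 - \<eta>*(1-p h)/tp h)"
  unfolding p_def P_Cons_raw using tp_pos[of h]
  by (auto simp: two_phase_loss_def wsu_est_def mix0 P1 p_def[symmetric] field_simps)
lemma p_ph1_1: "length h < T div 100 \<Longrightarrow> p (Suc 0#h) = p h"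
  unfolding p_def P_Cons_raw
  by (auto simp: two_phase_loss_def wsu_est_def)
lemma p_ph2_1: "\<not> length h < T div 100 \<Longrightarrow> p (Suc 0#h) = p h * (1 + \<eta>*(1-p h)/tq h)"
  unfolding p_def P_Cons_raw using tq_pos[of h]
  by (auto simp: two_phase_loss_def wsu_est_def mix1 P1 p_def[symmetric] field_simps)
lemma p_ph2_0: "\<not> length h < T div 100 \<Longrightarrow> p (0#h) = p h"
  unfolding p_def P_Cons_raw
  by (auto simp: two_phase_loss_def wsu_est_def)

definition pr :: "nat list \<Rightarrow> real" where "pr h = wsu_prob 2 \<eta> \<gamma> (two_phase_loss T) h"
definition H :: "nat \<Rightarrow> nat list set" where "H n = {xs. set xs \<subseteq> {..<2} \<and> length xs = n}"
definition Ex :: "nat \<Rightarrow> (nat list \<Rightarrow> real) \<Rightarrow> real" where "Ex n f = (\<Sum>h\<in>H n. pr h * f h)"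

lemma pr_Cons0: "pr (0#h) = pr h * tp h" by (simp add: pr_def mix0[unfolded P_def])
lemma pr_Cons1: "pr (Suc 0#h) = pr h * tq h" by (simp add: pr_def mix1[unfolded P_def])
lemma pr_nonneg_aux: "set h \<subseteq> {..<2} \<Longrightarrow> pr h \<ge> 0"
proof (induction h)
  case (Cons a h)
  then have "a = 0 \<or> a = Suc 0" and "pr h \<ge> 0" by auto
  then show ?case using tp_pos[of h] tq_pos[of h] by (auto simp: pr_Cons0 pr_Cons1)
qed (simp add: pr_def)

lemma finite_H: "finite (H n)" unfolding H_def by (rule finite_lists_length_eq) auto

lemma Ex_Suc: "Ex (Suc n) f = Ex n (\<lambda>h. tp h * f (0#h) + tq h * f (Suc 0#h))"
proof -
  have "H (Suc n) = (\<lambda>(xs, a). a#xs) ` (H n \<times> {..<2})"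
    unfolding H_def by (rule lists_length_Suc_eq)
  moreover have "inj_on (\<lambda>(xs, a). a#xs) (H n \<times> {..<2::nat})" by (auto simp: inj_on_def)
  ultimately have "Ex (Suc n) f = (\<Sum>(xs,a)\<in>H n \<times> {..<2}. pr (a#xs) * f (a#xs))"
    unfolding Ex_def by (intro sum.reindex_cong) auto
  also have "\<dots> = (\<Sum>xs\<in>H n. \<Sum>a<2. pr (a#xs) * f (a#xs))"
    by (rule sum.cartesian_product[symmetric])
  also have "\<dots> = Ex n (\<lambda>h. tp h * f (0#h) + tq h * f (Suc 0#h))"
    unfolding Ex_def by (simp add: numeral_2_eq_2 pr_Cons0 pr_Cons1 algebra_simps)
  finally show ?thesis .
qed

lemma H0: "H 0 = {[]}" by (auto simp: H_def)
lemma Ex_0: "Ex 0 f = f []" by (simp add: Ex_def H0 pr_def)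
lemma Ex_const: "Ex n (\<lambda>_. c) = c"
proof (induction n)
  case (Suc n) then show ?case by (simp add: Ex_Suc distrib_right[symmetric] tpq)
qed (simp add: Ex_0)
lemma Ex_add: "Ex n (\<lambda>h. f h + g h) = Ex n f + Ex n g" by (simp add: Ex_def algebra_simps sum.distrib)
lemma Ex_cmult: "Ex n (\<lambda>h. c * f h) = c * Ex n f" by (simp add: Ex_def algebra_simps sum_distrib_left)
lemma Ex_diff: "Ex n (\<lambda>h. f h - g h) = Ex n f - Ex n g" by (simp add: Ex_def algebra_simps sum_subtractf)
lemma pr_nonneg: "h \<in> H n \<Longrightarrow> pr h \<ge> 0" by (rule pr_nonneg_aux) (simp add: H_def)
lemma Ex_mono: "(\<And>h. f h \<le> g h) \<Longrightarrow> Ex n f \<le> Ex n g"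
  unfolding Ex_def by (rule sum_mono) (simp add: mult_left_mono pr_nonneg)
lemma Ex_mono': "(\<And>h. h \<in> H n \<Longrightarrow> f h \<le> g h) \<Longrightarrow> Ex n f \<le> Ex n g"
  unfolding Ex_def by (rule sum_mono) (simp add: mult_left_mono pr_nonneg)
lemma Ex_cong: "(\<And>h. h \<in> H n \<Longrightarrow> f h = g h) \<Longrightarrow> Ex n f = Ex n g"
  unfolding Ex_def by simp
lemma H_len: "h \<in> H n \<Longrightarrow> length h = n" by (simp add: H_def)

lemma Ex_drop: "Ex (n + k) (\<lambda>h. f (drop k h)) = Ex n f"
proof (induction k)
  case (Suc k)
  have "Ex (n + Suc k) (\<lambda>h. f (drop (Suc k) h)) = Ex (n+k) (\<lambda>h. (tp h + tq h) * f (drop k h))"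
    by (simp add: Ex_Suc algebra_simps)
  also have "\<dots> = Ex n f" using Suc by (simp add: tpq)
  finally show ?case .
qed simp


lemma x_bound: "\<eta>*(1-p h)/tp h \<le> 1/2" "\<eta>*(1-p h)/tq h \<le> 1/2"
proof -
  have "\<eta>*(1-p h) \<le> \<eta>" using eta_pos p_pos[of h] by (simp add: mult_left_le)
  also have "\<dots> \<le> tp h/2" using tp_ge[of h] eta_gamma by linarith
  finally show "\<eta>*(1-p h)/tp h \<le> 1/2" using tp_pos[of h] by (simp add: divide_le_eq)
  have "\<eta>*(1-p h) \<le> \<eta>" using eta_pos p_pos[of h] by (simp add: mult_left_le)
  also have "\<dots> \<le> tq h/2" using tq_ge[of h] eta_gamma by linarith
  finally show "\<eta>*(1-p h)/tq h \<le> 1/2" using tq_pos[of h] by (simp add: divide_le_eq)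
qed

lemma x_nonneg: "\<eta>*(1-p h)/tp h \<ge> 0" "\<eta>*(1-p h)/tq h \<ge> 0"
  using eta_pos p_lt1[of h] tp_pos[of h] tq_pos[of h] by auto

lemma p_half: "set h \<subseteq> {..<2} \<Longrightarrow> length h \<le> T div 100 \<Longrightarrow> p h \<le> 1/2"
proof (induction h)
  case Nil then show ?case by (simp add: p_def P_def)
next
  case (Cons a h)
  then have a: "a = 0 \<or> a = Suc 0" and l: "length h < T div 100" and ih: "p h \<le> 1/2" by auto
  have "p h * (1 - \<eta>*(1-p h)/tp h) \<le> p h"
    using x_nonneg(1)[of h] p_pos[of h] by (simp add: mult_left_le)
  then show ?case
  proof (cases "a = 0")
    case True then have "p (a#h) = p h * (1 - \<eta>*(1-p h)/tp h)" using p_ph1_0[OF l] by simp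
    then show ?thesis using ih \<open>p h * _ \<le> p h\<close> by linarith
  next
    case False then have "a = Suc 0" using a by simp
    then show ?thesis using p_ph1_1[OF l] ih by simp
  qed
qed

lemma H_cases: "h \<in> H n \<Longrightarrow> set h \<subseteq> {..<2} \<and> length h = n" by (simp add: H_def)

lemma S1: assumes "n < T div 100"
  shows "Ex (Suc n) (\<lambda>h. - ln (p h)) \<ge> Ex n (\<lambda>h. - ln (p h) + \<eta>*(1 - p h) + \<eta>^2*(1-p h)^2/(2*tp h))"
  unfolding Ex_Suc
proof (rule Ex_mono')
  fix h assume "h \<in> H n"
  then have l: "length h < T div 100" using assms H_cases by auto
  define x where "x = \<eta>*(1-p h)/tp h"
  have x0: "0 \<le> x" "x < 1" using x_nonneg(1)[of h] x_bound(1)[of h] unfolding x_def by linarith+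
  have e0: "p (0#h) = p h * (1 - x)" using p_ph1_0[OF l] by (simp add: x_def)
  have lp: "ln (p h * (1 - x)) = ln (p h) + ln (1 - x)" using x0 p_pos[of h] by (simp add: ln_mult)
  have "tp h * (- x - x^2/2) \<ge> tp h * ln (1 - x)"
    using ln_1m_le[OF x0] tp_pos[of h] by (simp add: mult_left_mono)
  moreover have "tp h * x = \<eta>*(1-p h)" "tp h * x^2 = \<eta>^2*(1-p h)^2/tp h"
    using tp_pos[of h] by (auto simp: x_def power2_eq_square field_simps)
  ultimately have "- (tp h * ln (1 - x)) \<ge> \<eta>*(1-p h) + \<eta>^2*(1-p h)^2/(2*tp h)"
    by (simp add: algebra_simps)
  then show "- ln (p h) + \<eta>*(1 - p h) + \<eta>^2*(1-p h)^2/(2*tp h)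
        \<le> tp h * - ln (p (0 # h)) + tq h * - ln (p (Suc 0 # h))"
  proof -
    have tq: "tq h = 1 - tp h" using tpq[of h] by simp
    have "tp h * - ln (p (0 # h)) + tq h * - ln (p (Suc 0 # h)) = - ln (p h) - tp h * ln (1-x)"
      unfolding e0 p_ph1_1[OF l] lp tq by (simp add: algebra_simps)
    with \<open>- (tp h * ln (1 - x)) \<ge> _\<close> show ?thesis by linarith
  qed
qed

lemma S2: assumes "\<not> n < T div 100"
  shows "Ex (Suc n) (\<lambda>h. - ln (p h)) \<ge> Ex n (\<lambda>h. - ln (p h) - \<eta>*(1 - p h))"
  unfolding Ex_Suc
proof (rule Ex_mono')
  fix h assume "h \<in> H n"
  then have l: "\<not> length h < T div 100" using assms H_cases by auto
  define y where "y = \<eta>*(1-p h)/tq h"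
  have y0: "0 \<le> y" using x_nonneg(2)[of h] by (auto simp: y_def)
  have e1: "p (Suc 0#h) = p h * (1 + y)" using p_ph2_1[OF l] by (simp add: y_def)
  have lp: "ln (p h * (1 + y)) = ln (p h) + ln (1 + y)" using y0 p_pos[of h] by (simp add: ln_mult)
  have "tq h * ln (1 + y) \<le> tq h * y"
    using ln_add_one_self_le_self[OF y0] tq_pos[of h] by (simp add: mult_left_mono)
  moreover have "tq h * y = \<eta>*(1-p h)" using tq_pos[of h] by (auto simp: y_def)
  ultimately show "- ln (p h) - \<eta>*(1 - p h)
        \<le> tp h * - ln (p (0 # h)) + tq h * - ln (p (Suc 0 # h))"
  proof -
    have tp: "tp h = 1 - tq h" using tpq[of h] by simp
    have "tp h * - ln (p (0 # h)) + tq h * - ln (p (Suc 0 # h)) = - ln (p h) - tq h * ln (1+y)"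
      unfolding e1 p_ph2_0[OF l] lp tp by (simp add: algebra_simps)
    with \<open>tq h * ln (1 + y) \<le> tq h * y\<close> \<open>tq h * y = _\<close> show ?thesis by linarith
  qed
qed

lemma S3: assumes "n < T div 100"
  shows "Ex (Suc n) p \<le> (1 - \<eta>/2) * Ex n p"
  unfolding Ex_Suc Ex_cmult[symmetric]
proof (rule Ex_mono')
  fix h assume h: "h \<in> H n"
  then have l: "length h < T div 100" using assms H_cases by auto
  have ph: "p h \<le> 1/2" using p_half h assms by (auto simp: H_def)
  define x where "x = \<eta>*(1-p h)/tp h"
  have e0: "p (0#h) = p h * (1 - x)" using p_ph1_0[OF l] by (simp add: x_def)
  have tx: "tp h * x = \<eta>*(1-p h)" using tp_pos[of h] by (simp add: x_def)
  have i: "\<eta>*(1-p h)*p h \<ge> \<eta>*(1/2)*p h" using ph eta_pos p_pos[of h] by (intro mult_right_mono mult_left_mono) auto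
  have tq: "tq h = 1 - tp h" using tpq[of h] by simp
  have "tp h * p (0 # h) + tq h * p (Suc 0 # h) = p h - (tp h * x) * p h"
    unfolding e0 p_ph1_1[OF l] tq by (simp add: algebra_simps)
  also have "\<dots> = p h - \<eta>*(1-p h)*p h" unfolding tx ..
  also have "\<dots> \<le> p h - \<eta>*(1/2)*p h" using i by linarith
  also have "\<dots> = (1 - \<eta>/2) * p h" by (simp add: algebra_simps)
  finally show "tp h * p (0 # h) + tq h * p (Suc 0 # h) \<le> (1 - \<eta>/2) * p h" .
qed


lemma S4: assumes "n < T div 100"
  shows "Ex (Suc n) (\<lambda>h. 1 / p h) \<le> (1 + 2*\<eta>) * Ex n (\<lambda>h. 1 / p h)"
  unfolding Ex_Suc Ex_cmult[symmetric]
proof (rule Ex_mono')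
  fix h assume h: "h \<in> H n"
  then have l: "length h < T div 100" using assms H_cases by auto
  define x where "x = \<eta>*(1-p h)/tp h"
  have x0: "0 \<le> x" "x \<le> 1/2" using x_nonneg(1)[of h] x_bound(1)[of h] unfolding x_def by linarith+
  have e0: "p (0#h) = p h * (1 - x)" using p_ph1_0[OF l] by (simp add: x_def)
  have tx: "tp h * x = \<eta>*(1-p h)" using tp_pos[of h] by (simp add: x_def)
  have "tp h * x \<le> 2*\<eta>*(1-x)"
  proof -
    have "tp h * x \<le> \<eta>" unfolding tx using eta_pos p_pos[of h] by (simp add: mult_left_le)
    also have "\<dots> \<le> 2*\<eta>*(1-x)" using eta_pos x0 by (simp add: algebra_simps)
    finally show ?thesis .
  qed
  then have A: "tp h / (1-x) \<le> tp h + 2*\<eta>" using x0 by (simp add: divide_le_eq algebra_simps)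
  have tq: "tq h = 1 - tp h" using tpq[of h] by simp
  have "tp h * (1 / p (0 # h)) + tq h * (1 / p (Suc 0 # h)) = (tp h / (1-x) + (1 - tp h)) / p h"
    unfolding e0 p_ph1_1[OF l] tq using x0 p_pos[of h] by (simp add: field_simps)
  also have "\<dots> \<le> (1 + 2*\<eta>) / p h" using A p_pos[of h] by (intro divide_right_mono) auto
  finally show "tp h * (1 / p (0 # h)) + tq h * (1 / p (Suc 0 # h)) \<le> (1 + 2*\<eta>) * (1 / p h)" by simp
qed

lemma S5: assumes "\<not> n < T div 100"
  shows "Ex (Suc n) (\<lambda>h. 1 / p h - 1) \<le> (1 - \<eta>/2) * Ex n (\<lambda>h. 1 / p h - 1)"
  unfolding Ex_Suc Ex_cmult[symmetric]
proof (rule Ex_mono')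
  fix h assume h: "h \<in> H n"
  then have l: "\<not> length h < T div 100" using assms H_cases by auto
  define y where "y = \<eta>*(1-p h)/tq h"
  have y0: "0 \<le> y" "y \<le> 1/2" using x_nonneg(2)[of h] x_bound(2)[of h] unfolding y_def by linarith+
  have e1: "p (Suc 0#h) = p h * (1 + y)" using p_ph2_1[OF l] by (simp add: y_def)
  have tp: "tp h = 1 - tq h" using tpq[of h] by simp
  have r0: "1 / p h - 1 \<ge> 0" using p_pos[of h] p_lt1[of h] by simp
  have "tp h * (1 / p (0 # h) - 1) + tq h * (1 / p (Suc 0 # h) - 1) = (1 / p h - 1) * (1 - \<eta>/(1+y))"
  proof -
    have ty: "tq h * y = \<eta>*(1-p h)" using tq_pos[of h] by (simp add: y_def)
    have "tp h * (1 / p (0 # h) - 1) + tq h * (1 / p (Suc 0 # h) - 1) = (1/p h - 1) - tq h * y / (p h * (1+y))"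
    proof -
      have d: "p h * (1+y) \<noteq> 0" "p h + y * p h \<noteq> 0" "p h + p h * y \<noteq> 0" using y0 p_pos[of h]
        by (auto simp: add_pos_nonneg) (smt (verit) mult_nonneg_nonneg)+
      show ?thesis unfolding e1 p_ph2_0[OF l] tp using d p_pos[of h] by (simp add: field_simps)
    qed
    also have "tq h * y / (p h * (1+y)) = (1/p h - 1)*(\<eta>/(1+y))"
      unfolding ty using y0 p_pos[of h] by (simp add: field_simps)
    finally show ?thesis by (simp only: right_diff_distrib mult_1_right)
  qed
  also have "\<dots> \<le> (1 / p h - 1) * (1 - \<eta>/2)"
  proof (rule mult_left_mono[OF _ r0])
    have "\<eta>/2 \<le> \<eta>/(1+y)" using y0 eta_pos by (intro divide_left_mono) auto
    then show "1 - \<eta> / (1 + y) \<le> 1 - \<eta> / 2" by linarith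
  qed
  finally show "tp h * (1 / p (0 # h) - 1) + tq h * (1 / p (Suc 0 # h) - 1) \<le> (1 - \<eta>/2) * (1 / p h - 1)"
    by (simp add: mult.commute)
qed

lemma Ex_tp: "Ex n tp = (1-\<gamma>) * Ex n p + \<gamma>/2"
  unfolding tp_def by (simp add: Ex_add Ex_cmult Ex_const)
lemma Ex_tq: "Ex n tq = (1-\<gamma>) * (1 - Ex n p) + \<gamma>/2"
  unfolding tq_def by (simp add: Ex_add Ex_cmult Ex_const Ex_diff)

lemma S6: "Ex n (\<lambda>h. 1 / tp h) \<ge> 1 / Ex n tp"
proof -
  define m where "m = Ex n tp"
  have m: "m \<ge> \<gamma>/2" unfolding m_def using Ex_mono[of "\<lambda>_. \<gamma>/2" tp n] tp_ge by (simp add: Ex_const)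
  then have m0: "m > 0" using gamma_pos by linarith
  have pt: "2/m - tp h / m^2 \<le> 1 / tp h" for h
  proof -
    have "0 \<le> (tp h - m)^2 / (tp h * m^2)" using tp_pos[of h] m0 by simp
    also have "(tp h - m)^2 / (tp h * m^2) = 1 / tp h - (2/m - tp h / m^2)"
      using tp_pos[of h] m0 by (simp add: field_simps power2_eq_square)
    finally show ?thesis by simp
  qed
  have "Ex n (\<lambda>h. 2/m - (1/m^2) * tp h) \<le> Ex n (\<lambda>h. 1 / tp h)"
    using pt by (intro Ex_mono) simp
  moreover have "Ex n (\<lambda>h. 2/m - (1/m^2) * tp h) = 1/m"
    unfolding Ex_diff Ex_const Ex_cmult m_def[symmetric] using m0 by (simp add: field_simps power2_eq_square)
  ultimately show ?thesis by (simp add: m_def)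
qed

lemma G_bound: assumes "n \<le> T div 100"
  shows "Ex n (\<lambda>h. (1-p h)^2/(2*tp h)) \<ge> 1 / (8 * (Ex n p + \<gamma>/2))"
proof -
  have "Ex n (\<lambda>h. (1/8) * (1 / tp h)) \<le> Ex n (\<lambda>h. (1-p h)^2/(2*tp h))"
  proof (rule Ex_mono')
    fix h assume "h \<in> H n"
    then have ph: "p h \<le> 1/2" using p_half assms H_cases by auto
    have "1/2 \<le> 1 - p h" using ph by simp
    then have "(1/2)*(1/2) \<le> (1 - p h)*(1-p h)" by (intro mult_mono) auto
    then have "1/4 \<le> (1 - p h)^2" by (simp add: power2_eq_square)
    then show "(1/8) * (1 / tp h) \<le> (1-p h)^2/(2*tp h)" using tp_pos[of h]
      by (simp add: field_simps)
  qed
  moreover have "1 / (8 * (Ex n p + \<gamma>/2)) \<le> (1/8) * (1 / Ex n tp)"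
  proof -
    have e0: "Ex n p \<ge> 0" using Ex_mono[of "\<lambda>_. 0" p n] p_pos by (simp add: Ex_const less_imp_le)
    have "\<gamma> * Ex n p \<le> Ex n p" using e0 gamma_lt gamma_pos by (intro mult_left_le_one_le) auto
    then have "0 < Ex n tp" "Ex n tp \<le> Ex n p + \<gamma>/2" unfolding Ex_tp using e0 gamma_pos gamma_lt
      by (auto simp: algebra_simps intro!: add_pos_nonneg mult_nonneg_nonneg)
    then show ?thesis by (simp add: frac_le)
  qed
  ultimately show ?thesis using S6[of n] unfolding Ex_cmult by linarith
qed

lemma I1: "n \<le> T div 100 \<Longrightarrow> Ex n p \<le> (1/2) * (1-\<eta>/2)^n"
proof (induction n)
  case 0 then show ?case by (simp add: Ex_0 p_def P_def)
next
  case (Suc n)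
  then have "Ex (Suc n) p \<le> (1 - \<eta>/2) * Ex n p" using S3 by simp
  also have "\<dots> \<le> (1 - \<eta>/2) * ((1/2) * (1-\<eta>/2)^n)" using Suc eta_gamma gamma_lt
    by (intro mult_left_mono) auto
  finally show ?case by (simp add: algebra_simps)
qed

lemma I2: "n \<le> T div 100 \<Longrightarrow> Ex n (\<lambda>h. 1 / p h) \<le> 2 * (1+2*\<eta>)^n"
proof (induction n)
  case 0 then show ?case by (simp add: Ex_0 p_def P_def)
next
  case (Suc n)
  then have "Ex (Suc n) (\<lambda>h. 1 / p h) \<le> (1 + 2*\<eta>) * Ex n (\<lambda>h. 1 / p h)" using S4 by simp
  also have "\<dots> \<le> (1 + 2*\<eta>) * (2 * (1+2*\<eta>)^n)" using Suc eta_pos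
    by (intro mult_left_mono) auto
  finally show ?case by (simp add: algebra_simps)
qed

lemma I3: "Ex (T div 100 + k) (\<lambda>h. 1 / p h - 1) \<le> (1-\<eta>/2)^k * Ex (T div 100) (\<lambda>h. 1 / p h - 1)"
proof (induction k)
  case (Suc k)
  have "Ex (T div 100 + Suc k) (\<lambda>h. 1 / p h - 1) \<le> (1-\<eta>/2) * Ex (T div 100 + k) (\<lambda>h. 1 / p h - 1)"
    using S5[of "T div 100 + k"] by simp
  also have "\<dots> \<le> (1-\<eta>/2) * ((1-\<eta>/2)^k * Ex (T div 100) (\<lambda>h. 1 / p h - 1))"
    using Suc eta_gamma gamma_lt by (intro mult_left_mono) auto
  finally show ?case by (simp add: algebra_simps)
qed simp


lemma sum_shift1: "(\<Sum>t=1..n. f t) = (\<Sum>k<n. f (Suc k))"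
  by (induction n) (auto simp: atLeastAtMostSuc_conv add.commute)

lemma sum_ind: "(\<Sum>t=1..n. (if t \<le> m then 1 else 0 :: real)) = real (min n m)"
  by (induction n) (auto simp: atLeastAtMostSuc_conv min_def)

lemma regret_eq:
  "wsu_expected_regret 2 \<eta> \<gamma> (two_phase_loss T) T
     = (\<Sum>n<T. Ex n (\<lambda>h. if n < T div 100 then tp h else tq h)) - real (T div 100)"
proof -
  define g where "g t h = (\<Sum>j<2. wsu_mix 2 \<gamma> (P h) j * two_phase_loss T t j)" for t h
  have g: "g t h = (if t \<le> T div 100 then tp h else tq h)" for t h
  proof -
    have two: "(\<Sum>j<2. F j) = F 0 + F 1" for F :: "nat \<Rightarrow> real" by (simp add: numeral_2_eq_2)
    show ?thesis unfolding g_def two using mix0[of h] mix1[of h] by (simp add: two_phase_loss_def)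
  qed
  have set: "{h. length h = T \<and> set h \<subseteq> {..<2}} = H T" by (auto simp: H_def)
  have "(\<Sum>h\<in>H T. pr h * wsu_alg_loss 2 \<eta> \<gamma> (two_phase_loss T) T h)
      = (\<Sum>h\<in>H T. \<Sum>t=1..T. pr h * g t (drop (T - (t-1)) h))"
    by (simp add: wsu_alg_loss_def g_def P_def sum_distrib_left)
  also have "\<dots> = (\<Sum>t=1..T. Ex T (\<lambda>h. g t (drop (T - (t-1)) h)))"
    unfolding Ex_def by (rule sum.swap)
  also have "\<dots> = (\<Sum>t=1..T. Ex (t-1) (g t))"
  proof (rule sum.cong[OF refl])
    fix t assume "t \<in> {1..T}"
    then have "T = (t-1) + (T - (t-1))" by auto
    then show "Ex T (\<lambda>h. g t (drop (T - (t-1)) h)) = Ex (t-1) (g t)"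
      using Ex_drop[of "t-1" "T-(t-1)" "g t"] by simp
  qed
  also have "\<dots> = (\<Sum>n<T. Ex n (\<lambda>h. if n < T div 100 then tp h else tq h))"
  proof -
    have g': "g (Suc n) = (\<lambda>h. if n < T div 100 then tp h else tq h)" for n
      by (rule ext) (simp add: g Suc_le_eq)
    show ?thesis unfolding sum_shift1 by (simp add: g')
  qed
  finally have A: "(\<Sum>h\<in>H T. pr h * wsu_alg_loss 2 \<eta> \<gamma> (two_phase_loss T) T h) = \<dots>" .
  have si: "(\<Sum>t=1..T. (if t \<le> T div 100 then 1 else 0 :: real)) = real (T div 100)"
    by (metis sum_ind min_absorb2 div_le_dividend)
  have s0: "(\<Sum>t=1..T. two_phase_loss T t 0) = real (T div 100)"
  proof -
    have "(\<Sum>t=1..T. two_phase_loss T t 0) = (\<Sum>t=1..T. (if t \<le> T div 100 then 1 else 0 :: real))"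
      by (intro sum.cong) (auto simp: two_phase_loss_def)
    then show ?thesis using si by simp
  qed
  have s1: "(\<Sum>t=1..T. two_phase_loss T t 1) = real T - real (T div 100)"
  proof -
    have "(\<Sum>t=1..T. two_phase_loss T t 1) = (\<Sum>t=1..T. 1 - (if t \<le> T div 100 then 1 else 0 :: real))"
      by (intro sum.cong) (auto simp: two_phase_loss_def)
    also have "\<dots> = real T - real (T div 100)" unfolding sum_subtractf si by simp
    finally show ?thesis .
  qed
  have "(\<lambda>i. \<Sum>t=1..T. two_phase_loss T t i) ` {..<2} = {real (T div 100), real T - real (T div 100)}"
    using s0 s1 by (auto simp: numeral_2_eq_2 lessThan_Suc)
  moreover have "real (T div 100) \<le> real T - real (T div 100)" by linarith
  ultimately have M: "Min ((\<lambda>i. \<Sum>t=1..T. two_phase_loss T t i) ` {..<2}) = real (T div 100)"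
    by (simp add: min_def)
  show ?thesis unfolding wsu_expected_regret_def set A[unfolded pr_def] M Ex_def pr_def ..
qed


lemma tele: "(\<And>k. k < n \<Longrightarrow> a (Suc k) \<ge> a k + d k) \<Longrightarrow> a n \<ge> a 0 + (\<Sum>k<n. d k)"
  for a d :: "nat \<Rightarrow> real"
proof (induction n)
  case (Suc n)
  then have "a n \<ge> a 0 + (\<Sum>k<n. d k)" by auto
  moreover have "a (Suc n) \<ge> a n + d n" using Suc.prems by auto
  ultimately show ?case by simp
qed simp

lemma sum_split: "(\<Sum>k<m+n. f k) = (\<Sum>k<m. f k) + (\<Sum>k<n. f (m+k))" for f :: "nat \<Rightarrow> real"
  by (induction n) auto

lemma main_bound:
  "wsu_expected_regret 2 \<eta> \<gamma> (two_phase_loss T) T \<ge>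
     \<gamma>*T/2 - \<gamma>*(T div 100) + (1-\<gamma>)*\<eta>*(\<Sum>n<T div 100. 1/(8*((1/2)*(1-\<eta>/2)^n + \<gamma>/2)))
     - 2*(1-\<eta>/2)^(T - T div 100)*(1+2*\<eta>)^(T div 100)/\<eta>"
proof -
  define T1 where "T1 = T div 100"
  define N where "N = T - T1"
  have TN: "T = T1 + N" unfolding N_def T1_def by simp
  define e where "e n = Ex n p" for n
  define A where "A n = Ex n (\<lambda>h. - ln (p h))" for n
  define G where "G n = Ex n (\<lambda>h. (1-p h)^2/(2*tp h))" for n
  define B where "B = 2*(1-\<eta>/2)^N*(1+2*\<eta>)^T1"
  have g: "0 < \<gamma>" "\<gamma> < 1/2" "0 < \<eta>" "\<eta> \<le> 1/8" using gamma_pos gamma_lt eta_pos eta_gamma by auto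
  have R: "wsu_expected_regret 2 \<eta> \<gamma> (two_phase_loss T) T
      = ((1-\<gamma>)*(\<Sum>n<T1. e n) + \<gamma>*T1/2) + ((1-\<gamma>)*(N - (\<Sum>k<N. e (T1+k))) + \<gamma>*N/2) - T1"
  proof -
    have "(\<Sum>n<T. Ex n (\<lambda>h. if n < T div 100 then tp h else tq h))
       = (\<Sum>n<T1. Ex n tp) + (\<Sum>k<N. Ex (T1+k) tq)"
    proof -
      have sp: "(\<Sum>n<T. F n) = (\<Sum>n<T1. F n) + (\<Sum>k<N. F (T1+k))" for F :: "nat \<Rightarrow> real"
        using sum_split[where m=T1 and n=N and f=F] TN by simp
      have a: "(\<Sum>n<T1. Ex n (\<lambda>h. if n < T div 100 then tp h else tq h)) = (\<Sum>n<T1. Ex n tp)"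
        by (rule sum.cong) (auto simp: T1_def)
      have b: "(\<Sum>k<N. Ex (T1+k) (\<lambda>h. if T1+k < T div 100 then tp h else tq h)) = (\<Sum>k<N. Ex (T1+k) tq)"
        by (rule sum.cong) (auto simp: T1_def)
      show ?thesis unfolding sp a b ..
    qed
    also have "\<dots> = ((1-\<gamma>)*(\<Sum>n<T1. e n) + \<gamma>*T1/2) + ((1-\<gamma>)*(N - (\<Sum>k<N. e (T1+k))) + \<gamma>*N/2)"
      unfolding Ex_tp Ex_tq e_def by (simp add: sum.distrib sum_distrib_left[symmetric] sum_subtractf mult.commute)
    finally show ?thesis unfolding regret_eq T1_def by simp
  qed
  have t1: "A T1 \<ge> A 0 + (\<Sum>n<T1. \<eta>*(1 - e n) + \<eta>^2 * G n)"
  proof (rule tele)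
    fix k assume "k < T1"
    then have "Ex (Suc k) (\<lambda>h. - ln (p h)) \<ge> Ex k (\<lambda>h. - ln (p h) + \<eta>*(1 - p h) + \<eta>^2*((1-p h)^2/(2*tp h)))"
      using S1[of k] unfolding T1_def by simp
    then show "A (Suc k) \<ge> A k + (\<eta>*(1 - e k) + \<eta>^2 * G k)"
      unfolding A_def e_def G_def Ex_add Ex_cmult Ex_diff Ex_const by simp
  qed
  have t2: "A (T1 + N) \<ge> A (T1 + 0) + (\<Sum>k<N. - (\<eta>*(1 - e (T1+k))))"
  proof (rule tele[where a="\<lambda>k. A (T1 + k)"])
    fix k assume "k < N"
    have "Ex (Suc (T1+k)) (\<lambda>h. - ln (p h)) \<ge> Ex (T1+k) (\<lambda>h. - ln (p h) - \<eta>*(1 - p h))"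
      using S2[of "T1+k"] unfolding T1_def by simp
    then show "A (T1 + Suc k) \<ge> A (T1 + k) + - (\<eta>*(1 - e (T1+k)))"
      unfolding A_def e_def Ex_add Ex_cmult Ex_diff Ex_const by simp
  qed
  have A0: "A 0 \<ge> 0" by (simp add: A_def Ex_0 p_def P_def)
  have AT: "A T \<le> B"
  proof -
    have eqT: "T div 100 + N = T" using TN T1_def by simp
    have "A T \<le> Ex T (\<lambda>h. 1 / p h - 1)" unfolding A_def
    proof (rule Ex_mono)
      fix h
      have "ln (1 / p h) \<le> 1 / p h - 1" using p_pos[of h] by (intro ln_le_minus_one) simp
      then show "- ln (p h) \<le> 1 / p h - 1" using p_pos[of h] by (simp add: ln_div)
    qed
    also have "\<dots> \<le> (1-\<eta>/2)^N * Ex T1 (\<lambda>h. 1 / p h - 1)" using I3[of N] unfolding eqT T1_def .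
    also have "\<dots> \<le> (1-\<eta>/2)^N * (2*(1+2*\<eta>)^T1)"
    proof (rule mult_left_mono)
      have "Ex T1 (\<lambda>h. 1 / p h - 1) \<le> Ex T1 (\<lambda>h. 1 / p h)" by (rule Ex_mono) simp
      also have "\<dots> \<le> 2*(1+2*\<eta>)^T1" using I2[of T1] unfolding T1_def by simp
      finally show "Ex T1 (\<lambda>h. 1 / p h - 1) \<le> 2*(1+2*\<eta>)^T1" .
    qed (use g in simp)
    finally show ?thesis unfolding B_def by (simp add: algebra_simps)
  qed
  have AT0: "A T \<ge> 0"
  proof -
    have "Ex T (\<lambda>_. 0) \<le> Ex T (\<lambda>h. - ln (p h))"
      by (rule Ex_mono) (use p_pos p_lt1 in \<open>simp add: less_imp_le\<close>)
    then show ?thesis unfolding A_def Ex_const .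
  qed
  have B0: "B \<ge> 0" unfolding B_def using g by simp
  have GS: "(\<Sum>n<T1. G n) \<ge> (\<Sum>n<T1. 1/(8*((1/2)*(1-\<eta>/2)^n + \<gamma>/2)))"
  proof (rule sum_mono)
    fix n assume "n \<in> {..<T1}"
    then have n: "n \<le> T div 100" unfolding T1_def by simp
    have e0: "e n \<ge> 0" unfolding e_def using Ex_mono[of "\<lambda>_. 0" p n] p_pos by (simp add: Ex_const less_imp_le)
    have "1/(8*((1/2)*(1-\<eta>/2)^n + \<gamma>/2)) \<le> 1 / (8 * (e n + \<gamma>/2))"
      using I1[OF n] e0 g unfolding e_def by (intro divide_left_mono mult_left_mono mult_pos_pos) auto
    also have "\<dots> \<le> G n" using G_bound[OF n] unfolding G_def e_def .
    finally show "1/(8*((1/2)*(1-\<eta>/2)^n + \<gamma>/2)) \<le> G n" .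
  qed
  have "\<eta> * (N - (\<Sum>k<N. e (T1+k))) \<ge> \<eta> * ((T1 - (\<Sum>n<T1. e n)) + \<eta> * (\<Sum>n<T1. G n) - B/\<eta>)"
  proof -
    have "(\<Sum>k<N. - (\<eta>*(1 - e (T1+k)))) = - (\<eta> * (N - (\<Sum>k<N. e (T1+k))))"
      by (simp add: sum_negf sum_distrib_left[symmetric] sum_subtractf)
    moreover have "(\<Sum>n<T1. \<eta>*(1 - e n) + \<eta>^2 * G n) = \<eta> * (T1 - (\<Sum>n<T1. e n)) + \<eta>^2 * (\<Sum>n<T1. G n)"
      by (simp add: sum.distrib sum_distrib_left[symmetric] sum_subtractf)
    moreover have "\<eta> * (B/\<eta>) = B" using g by simp
    ultimately show ?thesis using t1 t2 A0 AT TN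
      by (simp add: algebra_simps power2_eq_square)
  qed
  then have C: "N - (\<Sum>k<N. e (T1+k)) \<ge> (T1 - (\<Sum>n<T1. e n)) + \<eta> * (\<Sum>n<T1. G n) - B/\<eta>"
    using g by (simp add: mult_le_cancel_left_pos)
  have "(1-\<gamma>) * (N - (\<Sum>k<N. e (T1+k))) \<ge> (1-\<gamma>) * ((T1 - (\<Sum>n<T1. e n)) + \<eta> * (\<Sum>n<T1. G n) - B/\<eta>)"
    using C g by (intro mult_left_mono) auto
  moreover have "(1-\<gamma>)*\<eta>*(\<Sum>n<T1. G n) \<ge> (1-\<gamma>)*\<eta>*(\<Sum>n<T1. 1/(8*((1/2)*(1-\<eta>/2)^n + \<gamma>/2)))"
    using GS g by (intro mult_left_mono) auto
  moreover have "(1-\<gamma>) * (B/\<eta>) \<le> B/\<eta>" using B0 g by (intro mult_left_le_one_le) auto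
  moreover have "real T = real T1 + real N" using TN by simp
  ultimately have H: "(1-\<gamma>) * ((T1 - (\<Sum>n<T1. e n)) + \<eta> * (\<Sum>n<T1. G n) - B/\<eta>) \<le> (1-\<gamma>) * (N - (\<Sum>k<N. e (T1+k)))"
    "(1-\<gamma>)*\<eta>*(\<Sum>n<T1. 1/(8*((1/2)*(1-\<eta>/2)^n + \<gamma>/2))) \<le> (1-\<gamma>)*\<eta>*(\<Sum>n<T1. G n)"
    "(1-\<gamma>) * (B/\<eta>) \<le> B/\<eta>" "real T = real T1 + real N" by auto
  define S1 where "S1 = (\<Sum>n<T1. e n)"
  define S2 where "S2 = (\<Sum>k<N. e (T1+k))"
  define SG where "SG = (\<Sum>n<T1. G n)"
  define X where "X = (\<Sum>n<T1. 1/(8*((1/2)*(1-\<eta>/2)^n + \<gamma>/2)))"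
  have E1: "(1-\<gamma>) * ((T1 - S1) + \<eta> * SG - B/\<eta>) = T1 - \<gamma>*T1 - (1-\<gamma>)*S1 + (1-\<gamma>)*\<eta>*SG - (1-\<gamma>)*(B/\<eta>)"
    by (simp add: algebra_simps)
  have E2: "(1-\<gamma>)*(N - S2) = N - \<gamma>*N - (1-\<gamma>)*S2" by (simp add: algebra_simps)
  have E3: "\<gamma> * real T = \<gamma>*T1 + \<gamma>*N" using H(4) by (simp add: algebra_simps)
  have "\<gamma>*T/2 - \<gamma>*T1 + (1-\<gamma>)*\<eta>*X - B/\<eta>
     \<le> ((1-\<gamma>)*S1 + \<gamma>*T1/2) + ((1-\<gamma>)*(N - S2) + \<gamma>*N/2) - T1"
    using H[folded S1_def S2_def SG_def X_def] E1 E2 E3 by linarith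
  then show ?thesis unfolding R T1_def[symmetric] B_def[symmetric] N_def[symmetric] S1_def S2_def X_def .
qed

end

lemma exp_neg_le_inv: "y > 0 \<Longrightarrow> exp (- y) \<le> 1 / (y::real)"
proof -
  assume y: "y > 0"
  have "1 + y \<le> exp y" by simp
  then have "y \<le> exp y" by linarith
  then show ?thesis using y by (simp add: exp_minus field_simps)
qed

lemma final_real:
  fixes \<eta> \<gamma> R :: real and T :: nat
  assumes g: "0<\<eta>" "\<eta><1/2" "0<\<gamma>" "\<gamma><1/2" and g5: "4*\<eta> \<le> \<gamma>" and d: "100 dvd T"
    and eta: "\<eta> \<ge> real T powr (-2/3)" and gam: "\<gamma> \<le> real T powr (-1/3)"
    and big: "10^21 \<le> real T"
    and mainR: "R \<ge> \<gamma>*T/2 - \<gamma>*(T div 100) + (1-\<gamma>)*\<eta>*(\<Sum>n<T div 100. 1/(8*((1/2)*(1-\<eta>/2)^n + \<gamma>/2)))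
     - 2*(1-\<eta>/2)^(T - T div 100)*(1+2*\<eta>)^(T div 100)/\<eta>"
  shows "R \<ge> 1/200 * real T powr (2/3)"
proof -
  define x where "x = real T"
  have x0: "x > 0" using big unfolding x_def by simp
  define u where "u = x powr (1/3)"
  have u0: "u > 0" using x0 by (simp add: u_def)
  have upow: "x powr a = u powr (3*a)" for a using x0 by (simp add: u_def powr_powr)
  have p2: "u powr 2 = u^2" using powr_realpow[OF u0, of 2] by simp
  have p3: "u powr 3 = u^3" using powr_realpow[OF u0, of 3] by simp
  have u3: "u^3 = x"
  proof -
    have "x = x powr 1" using x0 by simp
    also have "\<dots> = u powr 3" using upow[of 1] by simp
    finally show ?thesis using p3 by simp
  qed
  have u23: "x powr (-2/3) = 1/u^2"
  proof -
    have "x powr (-2/3) = u powr (- 2)" using upow[of "-2/3"] by simp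
    also have "\<dots> = 1/u^2" unfolding powr_minus p2 by (simp add: divide_inverse)
    finally show ?thesis .
  qed
  have u13: "x powr (-1/3) = 1/u"
  proof -
    have "x powr (-1/3) = u powr (- 1)" using upow[of "-1/3"] by simp
    also have "\<dots> = 1/u" unfolding powr_minus using u0 by (simp add: divide_inverse)
    finally show ?thesis .
  qed
  have u2: "x powr (2/3) = u^2" using upow[of "2/3"] p2 by simp
  have u7: "u \<ge> 10^7"
  proof -
    have "((10::real)^21) powr (1/3) \<le> x powr (1/3)" using big unfolding x_def by (intro powr_mono2) auto
    moreover have "((10::real)^21) powr (1/3) = 10^7"
    proof -
      have "((10::real)^21) = (10^7) powr 3" by (simp add: powr_realpow[symmetric])
      then show ?thesis by (simp add: powr_powr)
    qed
    ultimately show ?thesis unfolding u_def by simp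
  qed
  then have u1000: "u \<ge> 1000" by simp
  have c1: "ln x \<le> x powr (-2/3) * ((x/100 - 1)/4)"
  proof -
    define s where "s = sqrt u"
    have s0: "s > 0" and ss: "s*s = u" using u0 by (auto simp: s_def)
    have s3: "s \<ge> 3000"
    proof -
      have "sqrt ((3000::real)^2) \<le> sqrt u" using u7 by (intro real_sqrt_le_mono) simp
      then show ?thesis by (simp add: s_def)
    qed
    have "x = s^6" using u3 ss by (simp add: power3_eq_cube numeral_eq_Suc) (metis mult.assoc mult.commute)
    then have "ln x = 6 * ln s" using s0 by (simp add: ln_realpow)
    also have "\<dots> \<le> 6 * s" using ln_le_minus_one[OF s0] by simp
    also have "\<dots> \<le> s*s/400 - 1/(4*(s*s)^2)"
    proof -
      have "1 * 1 \<le> s*s" using s3 by (intro mult_mono) auto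
      then have "1 \<le> (s*s)^2" by (simp add: one_le_power)
      then have "1/(4*(s*s)^2) \<le> 1" by (simp add: divide_le_eq del: power_mult_distrib)
      moreover have "7*s \<le> s*s/400" using s3 s0 by (simp add: field_simps)
      ultimately show ?thesis using s0 s3 by linarith
    qed
    also have "s*s/400 - 1/(4*(s*s)^2) = (1/u^2)*((u^3/100 - 1)/4)"
      unfolding ss using u0 by (simp add: field_simps power2_eq_square power3_eq_cube)
    also have "\<dots> = x powr (-2/3) * ((x/100 - 1)/4)" using u23 u3 by simp
    finally show ?thesis .
  qed

  have eta': "\<eta> \<ge> 1/u^2" using eta u23 unfolding x_def by simp
  have gam': "\<gamma> \<le> 1/u" using gam u13 unfolding x_def by simp
  define T1 where "T1 = T div 100"
  define N where "N = T - T1"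
  have T1x: "real T1 = x/100" using d unfolding T1_def x_def by (auto simp: real_of_nat_div)
  have Nx: "real N = x - x/100" unfolding N_def using T1x unfolding T1_def x_def by (simp add: of_nat_diff)
  define X where "X = (\<Sum>n<T1. 1/(8*((1/2)*(1-\<eta>/2)^n + \<gamma>/2)))"
  define B where "B = 2*(1-\<eta>/2)^N*(1+2*\<eta>)^T1"
  have main: "R \<ge> \<gamma>*x/2 - \<gamma>*T1 + (1-\<gamma>)*\<eta>*X - B/\<eta>"
    using mainR unfolding X_def B_def N_def T1_def x_def by simp
  have xbig: "x \<ge> 10^9" using u1000 u3 power_mono[OF u1000, of 3] by simp
  have X: "X \<ge> x/(1600*\<gamma>)"
  proof -
    let ?f = "\<lambda>n. 1/(8*((1/2)*(1-\<eta>/2)^n + \<gamma>/2))"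
    have fnn: "?f n \<ge> 0" for n using g by simp
    have each: "?f n \<ge> 1/(8*\<gamma>)" if n: "n \<in> {T1 div 2..<T1}" for n
    proof -
      have "T1 \<le> 2*(T1 div 2) + 1" by presburger
      then have "real T1 \<le> real (2*(T1 div 2) + 1)" by (simp only: of_nat_le_iff)
      then have "real (T1 div 2) \<ge> (real T1 - 1)/2" by simp
      then have nr: "real n \<ge> (x/100 - 1)/2" using n T1x by auto
      have "x/100 - 1 \<ge> 0" using xbig by simp
      have "\<eta> * real n / 2 \<ge> x powr (-2/3) * ((x/100 - 1)/4)"
      proof -
        have "x powr (-2/3) * ((x/100 - 1)/4) \<le> \<eta> * ((x/100 - 1)/4)"
          using eta \<open>x/100 - 1 \<ge> 0\<close> unfolding x_def by (intro mult_right_mono) auto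
        also have "\<dots> \<le> \<eta> * (real n / 2)" using nr g by (intro mult_left_mono) auto
        finally show ?thesis by simp
      qed
      then have lnx: "ln x \<le> \<eta> * real n / 2" using c1 by linarith
      have "(1-\<eta>/2)^n \<le> exp (-\<eta>/2)^n"
        using g by (intro power_mono) (auto simp: exp_ge_add_one_self[of "-\<eta>/2", simplified])
      also have "\<dots> = exp (- (\<eta> * real n / 2))" by (simp add: exp_of_nat_mult[symmetric] algebra_simps)
      also have "\<dots> \<le> exp (- ln x)" using lnx by simp
      also have "\<dots> = 1/x" using x0 by (simp add: exp_minus inverse_eq_divide)
      also have "1/x \<le> 1/u^2"
      proof -
        have "u^2 \<le> u^3" using u1000 by (simp add: power_increasing)
        then show ?thesis using u3 u0 x0 by (simp add: frac_le)
      qed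
      also have "\<dots> \<le> \<gamma>" using eta' g5 g by linarith
      finally have a: "(1-\<eta>/2)^n \<le> \<gamma>" .
      have "8*((1/2)*(1-\<eta>/2)^n + \<gamma>/2) \<le> 8*\<gamma>" using a by simp
      moreover have "0 < 8*((1/2)*(1-\<eta>/2)^n + \<gamma>/2)" using g by (simp add: add_nonneg_pos)
      ultimately show ?thesis by (simp add: frac_le)
    qed
    have "(\<Sum>n\<in>{T1 div 2..<T1}. 1/(8*\<gamma>)) \<le> (\<Sum>n\<in>{T1 div 2..<T1}. ?f n)"
      using each by (rule sum_mono)
    also have "\<dots> \<le> X" unfolding X_def by (rule sum_mono2) (use fnn in auto)
    finally have "real (T1 - T1 div 2) / (8*\<gamma>) \<le> X" by simp
    moreover have "real (T1 - T1 div 2) \<ge> x/200" using T1x by linarith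
    ultimately show ?thesis
    proof -
      assume a: "real (T1 - T1 div 2) / (8*\<gamma>) \<le> X" and b: "real (T1 - T1 div 2) \<ge> x/200"
      have "x/(1600*\<gamma>) = (x/200)/(8*\<gamma>)" by simp
      also have "\<dots> \<le> real (T1 - T1 div 2) / (8*\<gamma>)" using b g by (intro divide_right_mono) auto
      finally show ?thesis using a by linarith
    qed
  qed
  have Bb: "B/\<eta> \<le> 5*u"
  proof -
    have "(1-\<eta>/2)^N \<le> exp (-\<eta>/2)^N"
      using g by (intro power_mono) (auto simp: exp_ge_add_one_self[of "-\<eta>/2", simplified])
    moreover have "(1+2*\<eta>)^T1 \<le> exp (2*\<eta>)^T1"
      using g by (intro power_mono) (auto simp: exp_ge_add_one_self[of "2*\<eta>", simplified])
    ultimately have "B \<le> 2 * (exp (-\<eta>/2)^N * exp (2*\<eta>)^T1)" unfolding B_def using g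
      by (simp add: mult_mono)
    also have "exp (-\<eta>/2)^N * exp (2*\<eta>)^T1 = exp (- (\<eta>*x*(19/40)))"
      unfolding exp_of_nat_mult[symmetric] exp_add[symmetric] Nx T1x by (simp add: algebra_simps)
    also have "\<dots> \<le> 1/(\<eta>*x*(19/40))" using g x0 by (intro exp_neg_le_inv) simp
    finally have B1: "B \<le> 2 * (1/(\<eta>*x*(19/40)))" by simp
    have "B/\<eta> \<le> 2 * (1/(\<eta>*x*(19/40)))/\<eta>" by (rule divide_right_mono[OF B1]) (use g in simp)
    also have "\<dots> = (80/19) / (\<eta>^2 * x)" by (simp add: field_simps power2_eq_square)
    also have "\<dots> \<le> 5 / (\<eta>^2 * x)" using g x0 by (intro divide_right_mono) auto
    also have "\<dots> \<le> 5 * u"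
    proof -
      have "1/u^2 \<le> \<eta>" using eta' .
      then have "(1/u^2)^2 \<le> \<eta>^2" by (rule power_mono) (use u0 in simp)
      then have "(1/u^2)^2 * x \<le> \<eta>^2 * x" using x0 by simp
      moreover have "(1/u^2)^2 * x = 1/u" using u3 u0 x0 by (simp add: field_simps power2_eq_square power3_eq_cube)
      ultimately have "1/u \<le> \<eta>^2 * x" by simp
      then have "5 / (\<eta>^2 * x) \<le> 5 / (1/u)" using u0 g x0 by (intro divide_left_mono) auto
      then show ?thesis by simp
    qed
    finally show ?thesis .
  qed
  have se: "sqrt \<eta> \<ge> 1/u"
  proof -
    have "sqrt ((1/u)^2) \<le> sqrt \<eta>" using eta' by (intro real_sqrt_le_mono) (simp add: power_divide)
    then show ?thesis using u0 by simp
  qed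
  have sq: "sqrt \<eta> * sqrt \<eta> = \<eta>" using g by simp
  have eqs: "(1/100) * x * sqrt \<eta> = (1/100) * (x * sqrt \<eta>)" "(49/100)*\<gamma>*x = (49/100)*(\<gamma>*x)"
    "(49/100)*(sqrt \<eta>/40)*x = (49/100/40) * (x * sqrt \<eta>)" "x * sqrt \<eta> / 80 = (1/80) * (x * sqrt \<eta>)" "x * sqrt \<eta> \<ge> 0" using x0 g by simp_all
  have gain: "(49/100)*\<gamma>*x + \<eta>*x/(3200*\<gamma>) \<ge> (1/100) * x * sqrt \<eta>"
  proof (cases "\<gamma> \<ge> sqrt \<eta> / 40")
    case True
    then have "(49/100)*\<gamma>*x \<ge> (49/100)*(sqrt \<eta>/40)*x" using x0 by (intro mult_right_mono mult_left_mono) auto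
    moreover have "\<eta>*x/(3200*\<gamma>) \<ge> 0" using g x0 by simp
    moreover have "(49/100)*(sqrt \<eta>/40)*x = ((49/100)/40) * (x * sqrt \<eta>)" by simp
    ultimately show ?thesis using eqs by linarith
  next
    case False
    then have gl: "\<gamma> < sqrt \<eta> / 40" by simp
    have "\<eta>*x/(3200*(sqrt \<eta> / 40)) \<le> \<eta>*x/(3200*\<gamma>)"
      using g x0 gl by (intro divide_left_mono mult_pos_pos) auto
    moreover have "\<eta>*x/(3200*(sqrt \<eta> / 40)) = x * sqrt \<eta> / 80"
      using sq g by (simp add: field_simps)
    moreover have "(49/100)*\<gamma>*x \<ge> 0" using g x0 by simp
    ultimately show ?thesis using eqs by linarith
  qed
  have gain2: "(1/100) * x * sqrt \<eta> \<ge> (1/100) * u^2"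
  proof -
    have "(1/100) * x * (1/u) \<le> (1/100) * x * sqrt \<eta>" using se x0 by (intro mult_left_mono) auto
    moreover have "(1/100) * x * (1/u) = (1/100) * u^2" using u3 u0 by (simp add: field_simps power2_eq_square power3_eq_cube)
    ultimately show ?thesis by simp
  qed
  have Xg: "(1-\<gamma>)*\<eta>*X \<ge> \<eta>*x/(3200*\<gamma>)"
  proof -
    have "(1/2)*\<eta>*(x/(1600*\<gamma>)) \<le> (1-\<gamma>)*\<eta>*X"
      using X g x0 by (intro mult_mono) auto
    moreover have "(1/2)*\<eta>*(x/(1600*\<gamma>)) = \<eta>*x/(3200*\<gamma>)" by simp
    ultimately show ?thesis by simp
  qed
  have "\<gamma>*x/2 - \<gamma>*T1 = (49/100)*\<gamma>*x" using T1x by simp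
  then have R: "R \<ge> (1/100) * u^2 - 5*u"
    using main Xg Bb gain gain2 by linarith
  have "(1/100) * u^2 - 5*u \<ge> 1/200 * u^2"
  proof -
    have "5*u \<le> (1/200)*u*u" using u1000 u0 by (simp add: field_simps)
    then show ?thesis by (simp add: power2_eq_square)
  qed
  then show ?thesis using R u2 unfolding x_def by simp
qed


theorem theorem2:
  fixes \<eta> \<gamma> :: "nat \<Rightarrow> real"
  assumes valid: "\<And>T. T > 0 \<Longrightarrow> 100 dvd T \<Longrightarrow> valid_pair 2 (\<eta> T) (\<gamma> T)"
    and eta_lb: "\<And>T. T > 0 \<Longrightarrow> 100 dvd T \<Longrightarrow> \<eta> T \<ge> real T powr (-2/3)"
    and gamma_ub: "\<And>T. T > 0 \<Longrightarrow> 100 dvd T \<Longrightarrow> \<gamma> T \<le> real T powr (-1/3)"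
  shows "\<exists>c > 0. \<exists>T0. \<forall>T \<ge> T0. T > 0 \<longrightarrow> 100 dvd T \<longrightarrow>
           wsu_expected_regret 2 (\<eta> T) (\<gamma> T) (two_phase_loss T) T \<ge> c * real T powr (2/3)"
proof (intro exI[of _ "1/200"] conjI exI[of _ "10^21"] allI impI)
  show "(0::real) < 1/200" by simp
  fix T :: nat assume T: "10^21 \<le> T" "0 < T" "100 dvd T"
  have v: "valid_pair 2 (\<eta> T) (\<gamma> T)" using valid T by simp
  have g: "0 < \<eta> T" "\<eta> T < 1/2" "0 < \<gamma> T" "\<gamma> T < 1/2" "\<eta> T * 2 / \<gamma> T \<le> 1/2"
    using v by (auto simp: valid_pair_def)
  have g5: "4 * \<eta> T \<le> \<gamma> T" using g(5) g(3) by (simp add: divide_le_eq)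
  interpret W: wsu2 "\<eta> T" "\<gamma> T" T using g g5 by unfold_locales auto
  have big: "10^21 \<le> real T"
  proof -
    have "real (10^21 :: nat) \<le> real T" using T(1) by (simp only: of_nat_le_iff)
    then show ?thesis by simp
  qed
  show "1/200 * real T powr (2/3) \<le> wsu_expected_regret 2 (\<eta> T) (\<gamma> T) (two_phase_loss T) T"
    by (rule final_real[OF g(1-4) g5 T(3) eta_lb[OF T(2,3)] gamma_ub[OF T(2,3)] big W.main_bound])
qed

end
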